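(* Let $\mathcal{H}$ be a hierarchical generator. Then there exist positive coefficients $c_\varphi>0$, $\varphi\in\mathcal{H}$, such that $\sum_{\varphi\in\mathcal{H}}c_\varphi\varphi=1$ on $\Omega=[0,1]^d$.
   Context: Fix integers $d\ge1$, $n\ge2$, $m\ge2$; $s=n-1$, $p=m-1$. B-splines $\varphi^\ell_{\vec i}(\vec x)=\prod_kQ(n^\ell x_k-i_k)$ for $\ell\in\mathbb{Z}_{\ge0}$, $\vec i\in\mathbb{Z}^d$, where $Q$ is the uniform B-spline of order $m$ with knots $0,\dots,m$ normalized so that its integer translates sum to one; $\mathfrak{B}$ the set of all of them. $\mathcal{B}^0=\{\varphi^0_{\vec i}:\vec i\in[-p:0]^d\}$ (these sum to $1$ on $[0,1]^d$). Children $\mathrm{ch}(\varphi^\ell_{\vec i})=\{\varphi^{\ell+1}_{\vec k}:n\vec i\le\vec k\le n\vec i+sm\}$, extended to sets by union. A lineage is a finite $\mathcal{L}\subset\mathfrak{B}$ with $\mathcal{L}\subset\mathcal{B}^0\cup\mathrm{ch}(\mathcal{L})$; its hierarchical generator is $(\mathcal{B}^0\cup\mathrm{ch}(\mathcal{L}))\setminus\mathcal{L}$, and a hierarchical generator is any set arising this way. *)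

theory Defs
  imports Main "HOL-Library.Indicator_Function" Complex_Main
begin

text \<open>Uniform (cardinal) B-spline of order m with knots 0,...,m, normalized so that its
integer translates sum to one (Cox--de Boor recurrence).\<close>
fun bspline :: "nat \<Rightarrow> real \<Rightarrow> real" where
  "bspline 0 x = 0"
| "bspline (Suc 0) x = (if 0 \<le> x \<and> x < 1 then 1 else 0)"
| "bspline (Suc (Suc k)) x =
     (x * bspline (Suc k) x + (real (k + 2) - x) * bspline (Suc k) (x - 1)) / real (k + 1)"

text \<open>A B-spline phi^l_i is represented by its index (l, i), with i an integer vector of
length d. Points of R^d are functions nat => real (coordinates 0..d-1).\<close>
type_synonym bidx = "nat \<times> int list"

definition phi :: "nat \<Rightarrow> nat \<Rightarrow> nat \<Rightarrow> bidx \<Rightarrow> (nat \<Rightarrow> real) \<Rightarrow> real" where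
  "phi d n m b x = (\<Prod>k<d. bspline m (real n ^ fst b * x k - real_of_int (snd b ! k)))"

definition allB :: "nat \<Rightarrow> bidx set" where
  "allB d = {b. length (snd b) = d}"

definition B0 :: "nat \<Rightarrow> nat \<Rightarrow> bidx set" where
  "B0 d m = {(0, i) | i. length i = d \<and> (\<forall>k<d. - (int m - 1) \<le> i ! k \<and> i ! k \<le> 0)}"

definition ch :: "nat \<Rightarrow> nat \<Rightarrow> bidx \<Rightarrow> bidx set" where
  "ch n m b = {(Suc (fst b), j) | j. length j = length (snd b) \<and>
      (\<forall>k<length (snd b). int n * snd b ! k \<le> j ! k \<and>
                            j ! k \<le> int n * snd b ! k + (int n - 1) * int m)}"

definition chs :: "nat \<Rightarrow> nat \<Rightarrow> bidx set \<Rightarrow> bidx set" where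
  "chs n m L = (\<Union>b\<in>L. ch n m b)"

definition lineage :: "nat \<Rightarrow> nat \<Rightarrow> nat \<Rightarrow> bidx set \<Rightarrow> bool" where
  "lineage d n m L \<longleftrightarrow> finite L \<and> L \<subseteq> allB d \<and> L \<subseteq> B0 d m \<union> chs n m L"

definition hgen :: "nat \<Rightarrow> nat \<Rightarrow> nat \<Rightarrow> bidx set \<Rightarrow> bidx set" where
  "hgen d n m L = (B0 d m \<union> chs n m L) - L"

definition hierarchical_generator :: "nat \<Rightarrow> nat \<Rightarrow> nat \<Rightarrow> bidx set \<Rightarrow> bool" where
  "hierarchical_generator d n m H \<longleftrightarrow> (\<exists>L. lineage d n m L \<and> H = hgen d n m L)"

end

theory Submission
  imports Defs "HOL-Library.Groups_Big_Fun"
begin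

lemma Sum_any_shift: "Sum_any (\<lambda>j::int. f (j + s)) = (Sum_any f :: 'a::comm_monoid_add)"
proof -
  have b: "bij (\<lambda>j::int. j + s)"
    by (rule bij_betwI[where g="\<lambda>j. j - s"]) auto
  show ?thesis by (rule sym, rule Sum_any.reindex_cong[OF b]) (simp add: comp_def)
qed

lemma fin_dom: "finite {j. f j \<noteq> (0::'b::zero)} \<Longrightarrow> (\<And>j. f j = 0 \<Longrightarrow> g j = (0::'c::zero)) \<Longrightarrow> finite {j. g j \<noteq> 0}"
  by (rule finite_subset[of _ "{j. f j \<noteq> 0}"]) auto

lemma fin_shift: "finite {j. f j \<noteq> (0::'b::zero)} \<Longrightarrow> finite {j::int. f (j + s) \<noteq> 0}"
proof -
  assume a: "finite {j. f j \<noteq> (0::'b::zero)}"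
  have "{j::int. f (j + s) \<noteq> 0} = (\<lambda>j. j - s) ` {j. f j \<noteq> 0}"
    by (auto simp: image_iff) (metis add_diff_cancel_right')
  then show ?thesis using a by simp
qed

lemma bspline_supp: "bspline m y \<noteq> 0 \<Longrightarrow> 0 \<le> y \<and> y < real m"
proof (induction m y rule: bspline.induct)
  case (1 x) then show ?case by simp
next
  case (2 x) then show ?case by (simp split: if_splits)
next
  case (3 k x)
  then have "bspline (Suc k) x \<noteq> 0 \<or> bspline (Suc k) (x - 1) \<noteq> 0"
    by auto
  then show ?case using 3 by auto
qed

lemma bspline_supp2: "2 \<le> m \<Longrightarrow> bspline m y \<noteq> 0 \<Longrightarrow> 0 < y"
proof -
  assume "2 \<le> m" "bspline m y \<noteq> 0"
  then obtain k where k: "m = Suc (Suc k)" by (metis add_2_eq_Suc le_Suc_ex)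
  from \<open>bspline m y \<noteq> 0\<close> have "(y \<noteq> 0 \<and> bspline (Suc k) y \<noteq> 0) \<or> bspline (Suc k) (y - 1) \<noteq> 0"
    unfolding k by auto
  then show ?thesis using bspline_supp[of "Suc k" y] bspline_supp[of "Suc k" "y-1"] by force
qed

lemma fin_bs: "finite {j::int. bspline m (x - of_int j) \<noteq> 0}"
proof (rule finite_subset[of _ "{\<lfloor>x\<rfloor> - int m .. \<lfloor>x\<rfloor>}"])
  show "{j::int. bspline m (x - of_int j) \<noteq> 0} \<subseteq> {\<lfloor>x\<rfloor> - int m .. \<lfloor>x\<rfloor>}"
  proof
    fix j assume "j \<in> {j::int. bspline m (x - of_int j) \<noteq> 0}"
    then have "0 \<le> x - of_int j" "x - of_int j < real m" using bspline_supp by blast+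
    then show "j \<in> {\<lfloor>x\<rfloor> - int m .. \<lfloor>x\<rfloor>}" by (auto simp: le_floor_iff) linarith
  qed
qed auto

lemma bspline_pu: "1 \<le> m \<Longrightarrow> Sum_any (\<lambda>j::int. bspline m (x - of_int j)) = 1"
proof (induction m arbitrary: x rule: nat_induct_at_least)
  case base
  have "\<And>j. bspline 1 (x - of_int j) = (if j = \<lfloor>x\<rfloor> then 1 else 0)"
    by (simp add: floor_eq_iff) linarith
  then show ?case by simp
next
  case (Suc mm)
  then obtain k where k: "mm = Suc k" by (metis Suc_le_D One_nat_def)
  define F where "F = (\<lambda>i::int. bspline (Suc k) (x - of_int i))"
  have finF: "finite {i. F i \<noteq> 0}" unfolding F_def by (rule fin_bs)
  define A where "A = (\<lambda>i::int. (x - of_int i) * F i / real (k+1))"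
  define B where "B = (\<lambda>i::int. (real k + 1 - x + of_int i) * F i / real (k+1))"
  have finA: "finite {i. A i \<noteq> 0}" by (rule fin_dom[OF finF]) (simp add: A_def)
  have finB: "finite {i. B i \<noteq> 0}" by (rule fin_dom[OF finF]) (simp add: B_def)
  have "Sum_any (\<lambda>j::int. bspline (Suc mm) (x - of_int j)) = Sum_any (\<lambda>j. A j + B (j + 1))"
  proof (rule Sum_any.cong)
    fix j :: int
    have e: "x - of_int j - 1 = x - of_int (j + 1)" by simp
    have "bspline (Suc mm) (x - of_int j) = ((x - of_int j) * F j + (real (k+2) - (x - of_int j)) * F (j+1)) / real (k+1)"
      unfolding k F_def by (simp only: bspline.simps e)
    also have "\<dots> = A j + B (j + 1)"
      unfolding A_def B_def by (simp add: add_divide_distrib)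
    finally show "bspline (Suc mm) (x - of_int j) = A j + B (j + 1)" .
  qed
  also have "\<dots> = Sum_any (\<lambda>j. A j) + Sum_any (\<lambda>j. B (j + 1))"
    by (rule Sum_any.distrib[OF finA]) (rule fin_shift[OF finB])
  also have "Sum_any (\<lambda>j. B (j + 1)) = Sum_any B" by (rule Sum_any_shift)
  also have "Sum_any A + Sum_any B = Sum_any (\<lambda>j. A j + B j)"
    by (rule Sum_any.distrib[symmetric, OF finA finB])
  also have "\<dots> = Sum_any F"
  proof (rule Sum_any.cong)
    fix i
    have "A i + B i = ((x - of_int i) + (real k + 1 - x + of_int i)) * F i / real (k+1)"
      by (simp only: A_def B_def add_divide_distrib[symmetric] distrib_right[symmetric])
    also have "(x - of_int i) + (real k + 1 - x + of_int i) = real (k+1)" by simp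
    finally show "A i + B i = F i" by simp
  qed
  also have "\<dots> = 1" unfolding F_def k using Suc.IH k by simp
  finally show ?case .
qed


fun cc :: "nat \<Rightarrow> nat \<Rightarrow> int \<Rightarrow> real" where
  "cc n 0 j = (if j = 0 then 1 else 0)"
| "cc n (Suc m) j = (\<Sum>t<n. cc n m (j - int t))"

lemma cc_supp: "cc n m j \<noteq> 0 \<Longrightarrow> 0 \<le> j \<and> j \<le> (int n - 1) * int m"
proof (induction m arbitrary: j)
  case 0 then show ?case by (simp split: if_splits)
next
  case (Suc m)
  then obtain t where t: "t < n" "cc n m (j - int t) \<noteq> 0"
    by (auto elim: sum.not_neutral_contains_not_neutral)
  with Suc.IH[of "j - int t"] show ?case by (auto simp: algebra_simps)
qed

lemma cc_nonneg: "0 \<le> cc n m j"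
  by (induction m arbitrary: j) (auto intro: sum_nonneg)

lemma cc_pos: "1 \<le> n \<Longrightarrow> 0 \<le> j \<Longrightarrow> j \<le> (int n - 1) * int m \<Longrightarrow> 0 < cc n m j"
proof (induction m arbitrary: j)
  case 0 then show ?case by simp
next
  case (Suc m)
  define t0 where "t0 = (if j \<le> (int n - 1) * int m then 0 else j - (int n - 1) * int m)"
  have mn: "int m * 1 \<le> int m * int n" by (rule mult_left_mono) (use Suc.prems in auto)
  have t0: "0 \<le> t0" "t0 < int n" "0 \<le> j - t0" "j - t0 \<le> (int n - 1) * int m"
    using Suc.prems mn unfolding t0_def by (auto simp: algebra_simps)
  have "0 < cc n m (j - int (nat t0))" using Suc.IH[of "j - t0"] t0 by simp
  also have "\<dots> \<le> (\<Sum>t<n. cc n m (j - int t))"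
    by (rule member_le_sum[of "nat t0"]) (use t0 in \<open>auto intro: cc_nonneg\<close>)
  finally show ?case by simp
qed

lemma fin_cc: "finite {j. cc n m (j - s) \<noteq> 0}"
proof (rule finite_subset[of _ "{s .. s + (int n - 1) * int m}"])
  show "{j. cc n m (j - s) \<noteq> 0} \<subseteq> {s .. s + (int n - 1) * int m}"
    using cc_supp by fastforce
qed auto

lemma fin_cc0: "finite {j. cc n m j \<noteq> 0}"
  using fin_cc[of n m 0] by simp

lemma cc_id1: "cc n (Suc m) j - cc n (Suc m) (j - 1) = cc n m j - cc n m (j - int n)"
proof -
  have "cc n (Suc m) j - cc n (Suc m) (j - 1) = (\<Sum>t<n. cc n m (j - int t) - cc n m (j - int (Suc t)))"
    by (simp add: sum_subtractf algebra_simps)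
  also have "\<dots> = cc n m j - cc n m (j - int n)"
    using sum_lessThan_telescope'[where f="\<lambda>t. cc n m (j - int t)" and m=n] by simp
  finally show ?thesis .
qed

lemma cc_one: "cc n (Suc 0) j = (if 0 \<le> j \<and> j < int n then 1 else 0)"
proof (cases "0 \<le> j")
  case True
  have "cc n (Suc 0) j = (\<Sum>t<n. cc n 0 (j - int t))" by (rule cc.simps(2))
  also have "\<dots> = (\<Sum>t<n. if t = nat j then 1 else 0)"
  proof (rule sum.cong)
    fix t assume "t \<in> {..<n}"
    have "(j - int t = 0) = (t = nat j)" using True by auto
    then show "cc n 0 (j - int t) = (if t = nat j then 1 else 0)" by simp
  qed simp
  finally show ?thesis using True by auto
next
  case False
  then show ?thesis by auto
qed

lemma cc_id2: "- of_int j * cc n (Suc k) j + (real k + of_int j) * cc n (Suc k) (j - 1)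
   = real (Suc k) * real n * cc n k (j - int n)"
proof (induction k arbitrary: j)
  case 0
  show ?case unfolding cc_one by auto
next
  case (Suc k)
  define c1 where "c1 = cc n (Suc k)"
  define g where "g = (\<lambda>t::nat. real t * c1 (j - int t))"
  have e1: "cc n (Suc (Suc k)) j = (\<Sum>t<n. c1 (j - int t))" unfolding c1_def by (rule cc.simps(2))
  have e2: "cc n (Suc (Suc k)) (j - 1) = (\<Sum>t<n. c1 (j - int t - 1))"
    unfolding c1_def cc.simps(2)[of n "Suc k"] by (rule sum.cong) (simp_all add: algebra_simps)
  have "- of_int j * cc n (Suc (Suc k)) j + (real (Suc k) + of_int j) * cc n (Suc (Suc k)) (j - 1)
     = (\<Sum>t<n. - of_int j * c1 (j - int t) + (real (Suc k) + of_int j) * c1 (j - int t - 1))"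
    unfolding e1 e2 sum_distrib_left sum.distrib[symmetric] by simp
  also have "\<dots> = (\<Sum>t<n. (- of_int (j - int t) * c1 (j - int t) + (real k + of_int (j - int t)) * c1 (j - int t - 1))
               + (g (Suc t) - g t))"
    by (rule sum.cong) (simp_all add: g_def algebra_simps)
  also have "\<dots> = (\<Sum>t<n. real (Suc k) * real n * cc n k (j - int t - int n)) + (\<Sum>t<n. g (Suc t) - g t)"
    unfolding sum.distrib c1_def Suc.IH by simp
  also have "(\<Sum>t<n. g (Suc t) - g t) = g n - g 0" by (rule sum_lessThan_telescope)
  also have "(\<Sum>t<n. real (Suc k) * real n * cc n k (j - int t - int n)) = real (Suc k) * real n * c1 (j - int n)"
    unfolding c1_def cc.simps(2)[of n k] sum_distrib_left by (rule sum.cong) (simp_all add: algebra_simps)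
  also have "real (Suc k) * real n * c1 (j - int n) + (g n - g 0) = real (Suc (Suc k)) * real n * cc n (Suc k) (j - int n)"
    by (simp add: g_def c1_def algebra_simps)
  finally show ?case .
qed


definition aa :: "nat \<Rightarrow> nat \<Rightarrow> int \<Rightarrow> real" where
  "aa n m j = cc n m j / real n ^ (m - 1)"

lemma aa_coef:
  assumes n: "1 \<le> n"
  shows "aa n (Suc (Suc k)) i * (real n * y - of_int i) + aa n (Suc (Suc k)) (i - 1) * (real k + 1 - real n * y + of_int i)
       = y * aa n (Suc k) i + (real k + 2 - y) * aa n (Suc k) (i - int n)"
proof -
  define C2 where "C2 = cc n (Suc (Suc k))"
  define C1 where "C1 = cc n (Suc k)"
  have i1: "C2 i - C2 (i - 1) = C1 i - C1 (i - int n)" unfolding C1_def C2_def by (rule cc_id1)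
  have i2: "- of_int i * C2 i + (real (Suc k) + of_int i) * C2 (i - 1) = real (Suc (Suc k)) * real n * C1 (i - int n)"
    unfolding C1_def C2_def by (rule cc_id2)
  have "C2 i * (real n * y - of_int i) + C2 (i - 1) * (real k + 1 - real n * y + of_int i)
      = real n * y * (C2 i - C2 (i - 1)) + (- of_int i * C2 i + (real (Suc k) + of_int i) * C2 (i - 1))"
    by (simp add: algebra_simps)
  also have "\<dots> = real n * (y * C1 i + (real k + 2 - y) * C1 (i - int n))"
    unfolding i1 i2 by (simp add: algebra_simps)
  finally have H: "C2 i * (real n * y - of_int i) + C2 (i - 1) * (real k + 1 - real n * y + of_int i)
      = real n * (y * C1 i + (real k + 2 - y) * C1 (i - int n))" .
  have np: "0 < real n" using n by simp
  define D where "D = real n ^ k"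
  have Dp: "0 < D" using np unfolding D_def by simp
  have a2: "\<And>j. aa n (Suc (Suc k)) j = C2 j / (real n * D)" unfolding aa_def C2_def D_def by simp
  have a1: "\<And>j. aa n (Suc k) j = C1 j / D" unfolding aa_def C1_def D_def by simp
  have "aa n (Suc (Suc k)) i * (real n * y - of_int i) + aa n (Suc (Suc k)) (i - 1) * (real k + 1 - real n * y + of_int i)
     = (C2 i * (real n * y - of_int i) + C2 (i - 1) * (real k + 1 - real n * y + of_int i)) / (real n * D)"
    unfolding a2 by (simp add: add_divide_distrib)
  also have "\<dots> = (y * C1 i + (real k + 2 - y) * C1 (i - int n)) / D"
    unfolding H using np by simp
  also have "\<dots> = y * aa n (Suc k) i + (real k + 2 - y) * aa n (Suc k) (i - int n)"
    unfolding a1 by (simp add: add_divide_distrib)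
  finally show ?thesis .
qed

lemma alg_helper: "(y*a + b*c) * q / (r::real) = y/r*(a*q) + b/r*(c*q)"
  by (cases "r = 0") (simp_all add: field_simps)

lemma fin_aa: "finite {j. aa n m (j - s) \<noteq> 0}"
  by (rule fin_dom[OF fin_cc[of n m s]]) (simp add: aa_def)

lemma fin_aa0: "finite {j. aa n m j \<noteq> 0}"
  by (rule fin_dom[OF fin_cc0[of n m]]) (simp add: aa_def)

lemma refine: "1 \<le> m \<Longrightarrow> 1 \<le> n \<Longrightarrow>
  bspline m y = Sum_any (\<lambda>j. aa n m j * bspline m (real n * y - of_int j))"
proof (induction m arbitrary: y rule: nat_induct_at_least)
  case base
  let ?f = "\<lfloor>real n * y\<rfloor>"
  have "\<And>j. aa n 1 j * bspline 1 (real n * y - of_int j) =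
     (if j = ?f then (if 0 \<le> ?f \<and> ?f < int n then 1 else 0) else 0)"
  proof -
    fix j
    have a1: "aa n 1 j = (if 0 \<le> j \<and> j < int n then 1 else 0)"
      by (simp only: aa_def One_nat_def cc_one) simp
    have b1: "bspline 1 (real n * y - of_int j) = (if j = ?f then 1 else 0)"
      by (simp add: floor_eq_iff) linarith
    show "aa n 1 j * bspline 1 (real n * y - of_int j) =
     (if j = ?f then (if 0 \<le> ?f \<and> ?f < int n then 1 else 0) else 0)"
      unfolding a1 b1 by simp
  qed
  then have "Sum_any (\<lambda>j. aa n 1 j * bspline 1 (real n * y - of_int j)) =
     (if 0 \<le> ?f \<and> ?f < int n then 1 else 0)" by simp
  also have "(0 \<le> ?f \<and> ?f < int n) = (0 \<le> y \<and> y < 1)"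
    using base.prems by (auto simp: floor_less_iff zero_le_mult_iff)
  finally show ?case by simp
next
  case (Suc mm)
  then obtain k where k: "mm = Suc k" by (metis Suc_le_D One_nat_def)
  define z where "z = real n * y"
  define c2 where "c2 = aa n (Suc (Suc k))"
  define c1 where "c1 = aa n (Suc k)"
  define Q1 where "Q1 = bspline (Suc k)"
  define A where "A = (\<lambda>j::int. c2 j * (z - of_int j) * Q1 (z - of_int j) / real (k+1))"
  define B where "B = (\<lambda>i::int. c2 (i - 1) * (real k + 1 - z + of_int i) * Q1 (z - of_int i) / real (k+1))"
  have finA: "finite {i. A i \<noteq> 0}" by (rule fin_dom[OF fin_aa0[of n "Suc (Suc k)"]]) (simp add: A_def c2_def)
  have finB: "finite {i. B i \<noteq> 0}" by (rule fin_dom[OF fin_aa[of n "Suc (Suc k)" 1]]) (simp add: B_def c2_def)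
  have IH: "\<And>y. Q1 y = Sum_any (\<lambda>j. c1 j * Q1 (real n * y - of_int j))"
    unfolding Q1_def c1_def k[symmetric] by (rule Suc.IH) (rule Suc.prems)
  have "Sum_any (\<lambda>j. aa n (Suc mm) j * bspline (Suc mm) (real n * y - of_int j)) = Sum_any (\<lambda>j. A j + B (j + 1))"
  proof (rule Sum_any.cong)
    fix j :: int
    have e: "z - of_int j - 1 = z - of_int (j + 1)" by simp
    have bs: "bspline (Suc mm) (z - of_int j) = ((z - of_int j) * Q1 (z - of_int j) + (real (k+2) - (z - of_int j)) * Q1 (z - of_int (j+1))) / real (k+1)"
      unfolding k Q1_def by (simp only: bspline.simps e)
    have e2: "real k + 1 - z + of_int (j+1) = real (k+2) - (z - of_int j)" by simp
    have e3: "j + 1 - 1 = j" by simp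
    have "aa n (Suc mm) j * bspline (Suc mm) (real n * y - of_int j) =
       c2 j * (((z - of_int j) * Q1 (z - of_int j) + (real (k+2) - (z - of_int j)) * Q1 (z - of_int (j+1))) / real (k+1))"
      unfolding z_def[symmetric] bs c2_def k[symmetric] by (rule refl)
    also have "\<dots> = A j + B (j + 1)"
      unfolding A_def B_def e2 e3 by (simp only: add_divide_distrib distrib_left mult.assoc times_divide_eq_right)
    finally show "aa n (Suc mm) j * bspline (Suc mm) (real n * y - of_int j) = A j + B (j + 1)" .
  qed
  also have "\<dots> = Sum_any A + Sum_any (\<lambda>j. B (j + 1))"
    by (rule Sum_any.distrib[OF finA]) (rule fin_shift[OF finB])
  also have "Sum_any (\<lambda>j. B (j + 1)) = Sum_any B" by (rule Sum_any_shift)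
  also have "Sum_any A + Sum_any B = Sum_any (\<lambda>j. A j + B j)"
    by (rule Sum_any.distrib[symmetric, OF finA finB])
  also have "\<dots> = Sum_any (\<lambda>i. y / real (k+1) * (c1 i * Q1 (z - of_int i))
                    + (real k + 2 - y) / real (k+1) * (c1 (i - int n) * Q1 (z - of_int i)))"
  proof (rule Sum_any.cong)
    fix i
    have "A i + B i = (c2 i * (z - of_int i) + c2 (i - 1) * (real k + 1 - z + of_int i)) * Q1 (z - of_int i) / real (k+1)"
      by (simp only: A_def B_def add_divide_distrib[symmetric] distrib_right[symmetric])
    also have "c2 i * (z - of_int i) + c2 (i - 1) * (real k + 1 - z + of_int i) = y * c1 i + (real k + 2 - y) * c1 (i - int n)"
      unfolding c2_def c1_def z_def by (rule aa_coef) (use Suc.prems in simp)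
    finally show "A i + B i = y / real (k+1) * (c1 i * Q1 (z - of_int i))
                    + (real k + 2 - y) / real (k+1) * (c1 (i - int n) * Q1 (z - of_int i))"
      by (simp only: alg_helper)
  qed
  also have "\<dots> = Sum_any (\<lambda>i. y / real (k+1) * (c1 i * Q1 (z - of_int i)))
                 + Sum_any (\<lambda>i. (real k + 2 - y) / real (k+1) * (c1 (i - int n) * Q1 (z - of_int i)))"
    by (rule Sum_any.distrib) (rule fin_dom[OF fin_aa0[of n "Suc k"]], simp add: c1_def,
                              rule fin_dom[OF fin_aa[of n "Suc k" "int n"]], simp add: c1_def)
  also have "\<dots> = y / real (k+1) * Sum_any (\<lambda>i. c1 i * Q1 (z - of_int i))
                 + (real k + 2 - y) / real (k+1) * Sum_any (\<lambda>i. c1 (i - int n) * Q1 (z - of_int i))"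
    by (subst Sum_any_right_distrib, rule fin_dom[OF fin_aa0[of n "Suc k"]], simp add: c1_def,
        subst Sum_any_right_distrib, rule fin_dom[OF fin_aa[of n "Suc k" "int n"]], simp add: c1_def, rule refl)
  also have "Sum_any (\<lambda>i. c1 i * Q1 (z - of_int i)) = Q1 y" unfolding z_def by (rule IH[symmetric])
  also have "Sum_any (\<lambda>i. c1 (i - int n) * Q1 (z - of_int i)) = Sum_any (\<lambda>j. c1 (j + int n - int n) * Q1 (z - of_int (j + int n)))"
    by (rule Sum_any_shift[symmetric, where f="\<lambda>i. c1 (i - int n) * Q1 (z - of_int i)"])
  also have "\<dots> = Q1 (y - 1)"
    unfolding IH[of "y - 1"] z_def by (rule Sum_any.cong) (simp add: algebra_simps)
  also have "y / real (k+1) * Q1 y + (real k + 2 - y) / real (k+1) * Q1 (y - 1) = bspline (Suc mm) y"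
    unfolding k Q1_def by (simp add: add_divide_distrib)
  finally show ?case by simp
qed


lemma finite_box: "(\<And>k. k < d \<Longrightarrow> finite (S k)) \<Longrightarrow> finite {js. length js = d \<and> (\<forall>k<d. js!k \<in> S k)}"
proof -
  assume fs: "\<And>k. k < d \<Longrightarrow> finite (S k)"
  have "finite {xs. set xs \<subseteq> (\<Union>k<d. S k) \<and> length xs = d}"
    by (rule finite_lists_length_eq) (use fs in auto)
  moreover have "{js. length js = d \<and> (\<forall>k<d. js!k \<in> S k)} \<subseteq> {xs. set xs \<subseteq> (\<Union>k<d. S k) \<and> length xs = d}"
    by (auto simp: in_set_conv_nth) (metis lessThan_iff)
  ultimately show ?thesis by (rule finite_subset[rotated])
qed

lemma prod_sum_lists:
  fixes f :: "nat \<Rightarrow> 'a \<Rightarrow> real"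
  assumes "\<And>k. finite (S k)"
  shows "(\<Prod>k<d. \<Sum>j\<in>S k. f k j) = (\<Sum>js\<in>{js. length js = d \<and> (\<forall>k<d. js!k \<in> S k)}. \<Prod>k<d. f k (js!k))"
  using assms
proof (induction d arbitrary: S f)
  case 0
  have "{js. length js = 0 \<and> (\<forall>k<0. js!k \<in> S k)} = {[]}" by auto
  then show ?case by simp
next
  case (Suc d)
  let ?T = "{js. length js = d \<and> (\<forall>k<d. js!k \<in> S (Suc k))}"
  let ?g = "\<lambda>(j::'a, js). j # js"
  have eq: "{js. length js = Suc d \<and> (\<forall>k<Suc d. js!k \<in> S k)} = ?g ` (S 0 \<times> ?T)"
  proof
    show "{js. length js = Suc d \<and> (\<forall>k<Suc d. js!k \<in> S k)} \<subseteq> ?g ` (S 0 \<times> ?T)"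
    proof
      fix js assume a: "js \<in> {js. length js = Suc d \<and> (\<forall>k<Suc d. js!k \<in> S k)}"
      then obtain j r where js: "js = j # r" by (cases js) auto
      have "j \<in> S 0" using a js by auto
      moreover have "r \<in> ?T" using a js by fastforce
      ultimately show "js \<in> ?g ` (S 0 \<times> ?T)" unfolding js by force
    qed
  next
    show "?g ` (S 0 \<times> ?T) \<subseteq> {js. length js = Suc d \<and> (\<forall>k<Suc d. js!k \<in> S k)}"
      by (auto simp: less_Suc_eq_0_disj)
  qed
  have inj: "inj_on ?g (S 0 \<times> ?T)" by (auto simp: inj_on_def)
  have finT: "finite ?T" by (rule finite_box) (use Suc.prems in auto)
  have "(\<Prod>k<Suc d. \<Sum>j\<in>S k. f k j) = (\<Sum>j\<in>S 0. f 0 j) * (\<Prod>k<d. \<Sum>j\<in>S (Suc k). f (Suc k) j)"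
    by (rule prod.lessThan_Suc_shift)
  also have "(\<Prod>k<d. \<Sum>j\<in>S (Suc k). f (Suc k) j) = (\<Sum>js\<in>?T. \<Prod>k<d. f (Suc k) (js!k))"
    by (rule Suc.IH) (rule Suc.prems)
  also have "(\<Sum>j\<in>S 0. f 0 j) * (\<Sum>js\<in>?T. \<Prod>k<d. f (Suc k) (js!k))
      = (\<Sum>j\<in>S 0. \<Sum>js\<in>?T. f 0 j * (\<Prod>k<d. f (Suc k) (js!k)))"
    by (rule sum_product)
  also have "\<dots> = (\<Sum>(j,js)\<in>S 0 \<times> ?T. f 0 j * (\<Prod>k<d. f (Suc k) (js!k)))"
    by (rule sum.cartesian_product)
  also have "\<dots> = (\<Sum>p\<in>S 0 \<times> ?T. \<Prod>k<Suc d. f k (?g p ! k))"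
    by (rule sum.cong) (auto simp: prod.lessThan_Suc_shift simp del: prod.lessThan_Suc)
  also have "\<dots> = (\<Sum>js\<in>?g ` (S 0 \<times> ?T). \<Prod>k<Suc d. f k (js ! k))"
    by (rule sum.reindex[OF inj, symmetric, unfolded comp_def])
  finally show ?case unfolding eq .
qed


lemma aa_pos: "1 \<le> n \<Longrightarrow> 0 \<le> j \<Longrightarrow> j \<le> (int n - 1) * int m \<Longrightarrow> 0 < aa n m j"
  unfolding aa_def by (rule divide_pos_pos) (auto intro: cc_pos)

lemma aa_nonneg: "0 \<le> aa n m j"
  unfolding aa_def by (rule divide_nonneg_nonneg) (auto intro: cc_nonneg)

lemma refine_shift:
  assumes "1 \<le> m" "1 \<le> n"
  shows "bspline m (y - of_int s) = (\<Sum>j\<in>{int n * s .. int n * s + (int n - 1) * int m}.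
           aa n m (j - int n * s) * bspline m (real n * y - of_int j))"
proof -
  have "bspline m (y - of_int s) = Sum_any (\<lambda>j. aa n m j * bspline m (real n * (y - of_int s) - of_int j))"
    by (rule refine[OF assms])
  also have "\<dots> = Sum_any (\<lambda>j. (\<lambda>i. aa n m (i - int n * s) * bspline m (real n * y - of_int i)) (j + int n * s))"
    by (rule Sum_any.cong) (simp add: algebra_simps)
  also have "\<dots> = Sum_any (\<lambda>i. aa n m (i - int n * s) * bspline m (real n * y - of_int i))"
    by (rule Sum_any_shift)
  also have "\<dots> = (\<Sum>j\<in>{int n * s .. int n * s + (int n - 1) * int m}.
           aa n m (j - int n * s) * bspline m (real n * y - of_int j))"
  proof (rule Sum_any.expand_superset)
    show "{a. aa n m (a - int n * s) * bspline m (real n * y - of_int a) \<noteq> 0}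
        \<subseteq> {int n * s..int n * s + (int n - 1) * int m}"
    proof
      fix a assume "a \<in> {a. aa n m (a - int n * s) * bspline m (real n * y - of_int a) \<noteq> 0}"
      then have "cc n m (a - int n * s) \<noteq> 0" by (auto simp: aa_def)
      from cc_supp[OF this] show "a \<in> {int n * s..int n * s + (int n - 1) * int m}" by simp
    qed
  qed simp
  finally show ?thesis .
qed

lemma pu_B0_1d:
  assumes "2 \<le> m" "0 \<le> x" "x \<le> 1"
  shows "(\<Sum>j\<in>{-(int m - 1)..0}. bspline m (x - of_int j)) = 1"
proof -
  have "(\<Sum>j\<in>{-(int m - 1)..0}. bspline m (x - of_int j)) = Sum_any (\<lambda>j::int. bspline m (x - of_int j))"
  proof (rule Sum_any.expand_superset[symmetric])
    show "{a. bspline m (x - of_int a) \<noteq> 0} \<subseteq> {- (int m - 1)..0}"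
    proof
      fix j assume "j \<in> {a. bspline m (x - of_int a) \<noteq> 0}"
      then have nz: "bspline m (x - of_int j) \<noteq> 0" by simp
      have r1: "of_int j < (1::real)" using bspline_supp2[OF assms(1) nz] assms by linarith
      have r2: "(of_int (- int m) :: real) < of_int j" using bspline_supp[OF nz] assms by simp
      have "j < 1" using r1 by simp
      moreover have "- int m < j" using r2 of_int_less_iff by blast
      ultimately show "j \<in> {- (int m - 1)..0}" by simp
    qed
  qed simp
  also have "\<dots> = 1" by (rule bspline_pu) (use assms in simp)
  finally show ?thesis .
qed

lemma B0_eq: "B0 d m = Pair 0 ` {i. length i = d \<and> (\<forall>k<d. i!k \<in> {-(int m - 1)..0})}"
  by (auto simp: B0_def)

lemma pu_B0:
  assumes "2 \<le> m" "\<forall>k<d. 0 \<le> x k \<and> x k \<le> 1"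
  shows "(\<Sum>b\<in>B0 d m. phi d n m b x) = 1"
proof -
  let ?T = "{i. length i = d \<and> (\<forall>k<d. i!k \<in> {-(int m - 1)..0})}"
  have "(\<Sum>b\<in>B0 d m. phi d n m b x) = (\<Sum>i\<in>?T. phi d n m (0, i) x)"
    unfolding B0_eq by (rule sum.reindex[unfolded comp_def]) (auto simp: inj_on_def)
  also have "\<dots> = (\<Sum>i\<in>?T. \<Prod>k<d. bspline m (x k - of_int (i!k)))"
    by (simp add: phi_def)
  also have "\<dots> = (\<Prod>k<d. \<Sum>j\<in>{-(int m - 1)..0}. bspline m (x k - of_int j))"
    by (rule prod_sum_lists[symmetric]) simp
  also have "\<dots> = (\<Prod>k<d. 1)"
    by (rule prod.cong[OF refl]) (rule pu_B0_1d, use assms in auto)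
  finally show ?thesis by simp
qed

definition wgt :: "nat \<Rightarrow> nat \<Rightarrow> nat \<Rightarrow> bidx \<Rightarrow> bidx \<Rightarrow> real" where
  "wgt d n m b b' = (\<Prod>k<d. aa n m (snd b' ! k - int n * snd b ! k))"

lemma ch_eq: "ch n m (l, i) = Pair (Suc l) ` {j. length j = length i \<and>
   (\<forall>k<length i. j!k \<in> {int n * i!k .. int n * i!k + (int n - 1) * int m})}"
  by (auto simp: ch_def)

lemma refine_phi:
  assumes "1 \<le> m" "1 \<le> n" "length (snd b) = d"
  shows "phi d n m b x = (\<Sum>b'\<in>ch n m b. wgt d n m b b' * phi d n m b' x)"
proof -
  obtain l i where b: "b = (l, i)" by (cases b)
  have li: "length i = d" using assms b by simp
  let ?S = "\<lambda>k. {int n * i!k .. int n * i!k + (int n - 1) * int m}"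
  let ?T = "{j. length j = d \<and> (\<forall>k<d. j!k \<in> ?S k)}"
  have "phi d n m b x = (\<Prod>k<d. bspline m (real n ^ l * x k - of_int (i!k)))" by (simp add: phi_def b)
  also have "\<dots> = (\<Prod>k<d. \<Sum>j\<in>?S k. aa n m (j - int n * i!k) * bspline m (real n ^ Suc l * x k - of_int j))"
  proof (rule prod.cong[OF refl])
    fix k
    show "bspline m (real n ^ l * x k - of_int (i!k)) = (\<Sum>j\<in>?S k. aa n m (j - int n * i!k) * bspline m (real n ^ Suc l * x k - of_int j))"
      by (subst refine_shift[OF assms(1,2)]) (simp add: mult.assoc)
  qed
  also have "\<dots> = (\<Sum>js\<in>?T. \<Prod>k<d. aa n m (js!k - int n * i!k) * bspline m (real n ^ Suc l * x k - of_int (js!k)))"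
    by (rule prod_sum_lists) simp
  also have "\<dots> = (\<Sum>js\<in>?T. wgt d n m b (Suc l, js) * phi d n m (Suc l, js) x)"
    by (rule sum.cong[OF refl]) (simp add: wgt_def phi_def b prod.distrib)
  also have "\<dots> = (\<Sum>b'\<in>Pair (Suc l) ` ?T. wgt d n m b b' * phi d n m b' x)"
    by (rule sum.reindex[symmetric, unfolded comp_def]) (auto simp: inj_on_def)
  also have "Pair (Suc l) ` ?T = ch n m b" unfolding b ch_eq li ..
  finally show ?thesis .
qed

lemma wgt_pos:
  assumes "1 \<le> n" "length (snd b) = d" "b' \<in> ch n m b"
  shows "0 < wgt d n m b b'"
  unfolding wgt_def
proof (rule prod_pos)
  fix k assume "k \<in> {..<d}"
  then show "0 < aa n m (snd b' ! k - int n * snd b ! k)"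
    using assms by (intro aa_pos) (auto simp: ch_def)
qed

lemma wgt_nonneg: "0 \<le> wgt d n m b b'"
  unfolding wgt_def by (rule prod_nonneg) (simp add: aa_nonneg)

lemma finite_B0: "finite (B0 d m)"
  unfolding B0_eq by (rule finite_imageI, rule finite_box) simp

lemma finite_ch: "finite (ch n m b)"
proof -
  obtain l i where b: "b = (l, i)" by (cases b)
  show ?thesis unfolding b ch_eq by (rule finite_imageI, rule finite_box) simp
qed

lemma finite_chs: "finite L \<Longrightarrow> finite (chs n m L)"
  unfolding chs_def by (simp add: finite_ch)

lemma B0_level: "b \<in> B0 d m \<Longrightarrow> fst b = 0"
  by (auto simp: B0_def)

lemma ch_level: "b' \<in> ch n m b \<Longrightarrow> fst b' = Suc (fst b)"
  by (auto simp: ch_def)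


theorem lemma4p10:
  fixes d n m :: nat and H :: "bidx set"
  assumes "d \<ge> 1" and "n \<ge> 2" and "m \<ge> 2"
    and "hierarchical_generator d n m H"
  shows "\<exists>c :: bidx \<Rightarrow> real. (\<forall>b\<in>H. c b > 0) \<and>
           (\<forall>x :: nat \<Rightarrow> real. (\<forall>k<d. 0 \<le> x k \<and> x k \<le> 1) \<longrightarrow>
              (\<Sum>b\<in>H. c b * phi d n m b x) = 1)"
proof -
  have n1: "1 \<le> n" and m1: "1 \<le> m" using assms by auto
  obtain L where lin: "lineage d n m L" and HL: "H = hgen d n m L"
    using assms(4) unfolding hierarchical_generator_def by blast
  have finL: "finite L" and LA: "L \<subseteq> allB d" and Lsub: "L \<subseteq> B0 d m \<union> chs n m L"
    using lin unfolding lineage_def by auto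
  define Lt where "Lt t = {b\<in>L. fst b < t}" for t
  define G where "G t = (B0 d m \<union> chs n m (Lt t)) - Lt t" for t
  have finLt: "finite (Lt t)" for t using finL unfolding Lt_def by simp
  have finG: "finite (G t)" for t
    unfolding G_def using finite_B0 finite_chs[OF finLt] by auto
  have main: "\<exists>c. (\<forall>b\<in>G t. 0 < c b) \<and>
      (\<forall>x. (\<forall>k<d. 0 \<le> x k \<and> x k \<le> 1) \<longrightarrow> (\<Sum>b\<in>G t. c b * phi d n m b x) = 1)" for t
  proof (induction t)
    case 0
    have "Lt 0 = {}" unfolding Lt_def by simp
    then have "G 0 = B0 d m" unfolding G_def chs_def by simp
    then show ?case using pu_B0[OF assms(3)] by (intro exI[of _ "\<lambda>_. 1"]) simp
  next
    case (Suc t)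
    then obtain c where cpos: "\<forall>b\<in>G t. 0 < c b"
      and csum: "\<And>x. (\<forall>k<d. 0 \<le> x k \<and> x k \<le> 1) \<Longrightarrow> (\<Sum>b\<in>G t. c b * phi d n m b x) = 1" by blast
    define N where "N = {b\<in>L. fst b = t}"
    have finN: "finite N" using finL unfolding N_def by simp
    have LtS: "Lt (Suc t) = Lt t \<union> N" unfolding Lt_def N_def by auto
    have NG: "N \<subseteq> G t"
    proof
      fix b assume bN: "b \<in> N"
      then have bL: "b \<in> L" and bt: "fst b = t" unfolding N_def by auto
      have nLt: "b \<notin> Lt t" using bt unfolding Lt_def by simp
      from bL Lsub have "b \<in> B0 d m \<or> b \<in> chs n m L" by auto
      then have "b \<in> B0 d m \<union> chs n m (Lt t)"
      proof
        assume "b \<in> chs n m L"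
        then obtain p where pL: "p \<in> L" and bp: "b \<in> ch n m p" unfolding chs_def by auto
        have "fst p < t" using ch_level[OF bp] bt by simp
        then have "p \<in> Lt t" using pL unfolding Lt_def by simp
        then show ?thesis using bp unfolding chs_def by auto
      qed simp
      then show "b \<in> G t" using nLt unfolding G_def by simp
    qed
    have chN_level: "\<And>b'. b' \<in> chs n m N \<Longrightarrow> fst b' = Suc t"
      unfolding chs_def N_def using ch_level by fastforce
    have GS: "G (Suc t) = (G t - N) \<union> chs n m N"
    proof -
      have "chs n m (Lt t \<union> N) = chs n m (Lt t) \<union> chs n m N" unfolding chs_def by auto
      moreover have "\<And>b'. b' \<in> chs n m N \<Longrightarrow> b' \<notin> Lt t \<and> b' \<notin> N"
        using chN_level unfolding Lt_def N_def by fastforce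
      ultimately show ?thesis unfolding G_def LtS by blast
    qed
    have NA: "\<And>p. p \<in> N \<Longrightarrow> length (snd p) = d" using LA unfolding N_def allB_def by auto
    have chG: "\<And>p. p \<in> N \<Longrightarrow> ch n m p \<subseteq> G (Suc t)" unfolding GS chs_def by auto
    define c' where "c' b = (if b \<in> G t - N then c b else 0)
        + (\<Sum>p\<in>N. c p * (if b \<in> ch n m p then wgt d n m p b else 0))" for b
    have S2nn: "0 \<le> (\<Sum>p\<in>N. c p * (if b \<in> ch n m p then wgt d n m p b else 0))" for b
      by (rule sum_nonneg) (use NG cpos in \<open>auto intro!: mult_nonneg_nonneg wgt_nonneg simp: less_imp_le\<close>)
    have pos: "\<forall>b\<in>G (Suc t). 0 < c' b"
    proof
      fix b assume "b \<in> G (Suc t)"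
      show "0 < c' b"
      proof (cases "b \<in> G t - N")
        case True
        then show ?thesis unfolding c'_def using cpos S2nn[of b] by (simp add: add_pos_nonneg)
      next
        case False
        with \<open>b \<in> G (Suc t)\<close> GS have "b \<in> chs n m N" by auto
        then obtain p where pN: "p \<in> N" and bp: "b \<in> ch n m p" unfolding chs_def by auto
        have "0 < c p * (if b \<in> ch n m p then wgt d n m p b else 0)"
          using bp wgt_pos[OF n1 NA[OF pN] bp] cpos NG pN by auto
        also have "\<dots> \<le> (\<Sum>p\<in>N. c p * (if b \<in> ch n m p then wgt d n m p b else 0))"
          by (rule member_le_sum[OF pN]) (use NG cpos in \<open>auto intro!: mult_nonneg_nonneg wgt_nonneg simp: less_imp_le\<close>, rule finN)
        finally have "0 < (\<Sum>p\<in>N. c p * (if b \<in> ch n m p then wgt d n m p b else 0))" .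
        then show ?thesis unfolding c'_def using False by (simp only: if_False add_0_left)
      qed
    qed
    have sum1: "(\<Sum>b\<in>G (Suc t). c' b * phi d n m b x) = 1" if cube: "\<forall>k<d. 0 \<le> x k \<and> x k \<le> 1" for x
    proof -
      let ?P = "\<lambda>b. phi d n m b x"
      have "(\<Sum>b\<in>G (Suc t). c' b * ?P b) =
         (\<Sum>b\<in>G (Suc t). (if b \<in> G t - N then c b * ?P b else 0))
         + (\<Sum>b\<in>G (Suc t). \<Sum>p\<in>N. c p * (if b \<in> ch n m p then wgt d n m p b * ?P b else 0))"
        unfolding sum.distrib[symmetric]
      proof (rule sum.cong[OF refl])
        fix b
        have e: "(\<Sum>p\<in>N. c p * (if b \<in> ch n m p then wgt d n m p b else 0)) * ?P b
           = (\<Sum>p\<in>N. c p * (if b \<in> ch n m p then wgt d n m p b * ?P b else 0))"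
          unfolding sum_distrib_right by (rule sum.cong[OF refl]) simp
        show "c' b * ?P b = (if b \<in> G t - N then c b * ?P b else 0)
           + (\<Sum>p\<in>N. c p * (if b \<in> ch n m p then wgt d n m p b * ?P b else 0))"
          unfolding c'_def distrib_right e by simp
      qed
      also have "(\<Sum>b\<in>G (Suc t). (if b \<in> G t - N then c b * ?P b else 0)) = (\<Sum>b\<in>G (Suc t) \<inter> (G t - N). c b * ?P b)"
        by (rule sum.inter_restrict[symmetric, OF finG])
      also have "G (Suc t) \<inter> (G t - N) = G t - N" unfolding GS by auto
      also have "(\<Sum>b\<in>G (Suc t). \<Sum>p\<in>N. c p * (if b \<in> ch n m p then wgt d n m p b * ?P b else 0))
          = (\<Sum>p\<in>N. c p * (\<Sum>b\<in>G (Suc t). (if b \<in> ch n m p then wgt d n m p b * ?P b else 0)))"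
        unfolding sum_distrib_left by (rule sum.swap)
      also have "\<dots> = (\<Sum>p\<in>N. c p * ?P p)"
      proof (rule sum.cong[OF refl])
        fix p assume pN: "p \<in> N"
        have "(\<Sum>b\<in>G (Suc t). (if b \<in> ch n m p then wgt d n m p b * ?P b else 0))
            = (\<Sum>b\<in>G (Suc t) \<inter> ch n m p. wgt d n m p b * ?P b)"
          by (rule sum.inter_restrict[symmetric, OF finG])
        also have "G (Suc t) \<inter> ch n m p = ch n m p" using chG[OF pN] by auto
        also have "(\<Sum>b\<in>ch n m p. wgt d n m p b * ?P b) = ?P p"
          by (rule refine_phi[symmetric, OF m1 n1 NA[OF pN]])
        finally show "c p * (\<Sum>b\<in>G (Suc t). (if b \<in> ch n m p then wgt d n m p b * ?P b else 0)) = c p * ?P p"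
          by simp
      qed
      also have "(\<Sum>b\<in>G t - N. c b * ?P b) + (\<Sum>p\<in>N. c p * ?P p) = (\<Sum>b\<in>G t. c b * ?P b)"
        by (rule sum.subset_diff[symmetric, OF NG finG])
      also have "\<dots> = 1" by (rule csum[OF cube])
      finally show ?thesis .
    qed
    show ?case using pos sum1 by blast
  qed
  define T where "T = Suc (\<Sum>b\<in>L. fst b)"
  have "Lt T = L"
  proof -
    have "\<And>b. b \<in> L \<Longrightarrow> fst b < T"
      unfolding T_def using member_le_sum[OF _ _ finL, of _ fst] by (simp add: le_imp_less_Suc)
    then show ?thesis unfolding Lt_def by auto
  qed
  then have "G T = H" unfolding G_def HL hgen_def by simp
  then show ?thesis using main[of T] by simp
qed

end
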